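(* Let $\Lambda$ denote the von Mangoldt function and let $\varepsilon>0$ be a small number. Then, as $x\to\infty$, \[ \sum_{n\leq x}\Lambda([x/n])\Lambda([x/n]+2) = r_2 x + O\left(x^{(2+\varepsilon)/3}\log^2 x\right), \] where the density constant is \[ r_2=\sum_{n\geq 1}\frac{\Lambda(n)\Lambda(n+2)}{n(n+1)}\geq 0.368142813. \]
   Context: $[t]$ denotes the largest integer not exceeding $t$. The von Mangoldt function is $\Lambda(m)=\log p$ if $m=p^k$ for a prime $p$ and an integer $k\geq 1$, and $\Lambda(m)=0$ otherwise. The sum is over positive integers $n\le x$. *)

theory Defs
  imports "HOL-Analysis.Analysis" "HOL-Number_Theory.Number_Theory" "HOL-Library.Landau_Symbols"
begin

definition r2_term :: "nat \<Rightarrow> real" where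
  "r2_term m = mangoldt m * mangoldt (m + 2) / (real m * real (m + 1))"

definition r2 :: real where
  "r2 = (\<Sum>n. r2_term (Suc n))"

definition S2 :: "real \<Rightarrow> real" where
  "S2 x = (\<Sum>n\<in>{1..nat \<lfloor>x\<rfloor>}. mangoldt (nat \<lfloor>x / real n\<rfloor>) * mangoldt (nat \<lfloor>x / real n\<rfloor> + 2))"

end

theory Submission
  imports Defs
begin


lemma ln_lower: "(y::real) > 0 \<Longrightarrow> 1 - 1/y \<le> ln y"
  using ln_le_minus_one[of "1/y"] by (simp add: ln_div)

lemma ln_split: "(a::real) > 0 \<Longrightarrow> b > 0 \<Longrightarrow> ln b = ln a + ln (b/a)"
  using ln_mult[of a "b/a"] by simp

lemma r2_lower: "0.368142813 \<le> r2_term 2 + r2_term 3 + r2_term 5 + r2_term 7 + r2_term 9"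
proof -
  have p: "prime (2::nat)" "prime (3::nat)" "prime (5::nat)" "prime (7::nat)" "prime (11::nat)" by simp_all
  have m4: "mangoldt 4 = (ln 2::real)" using mangoldt_primepow'[of 2 2, where 'a=real] by simp
  have m9: "mangoldt 9 = (ln 3::real)" using mangoldt_primepow'[of 3 2, where 'a=real] by simp
  have e: "r2_term 2 = ln 2 * ln 2 / 6" "r2_term 3 = ln 3 * ln 5 / 12" "r2_term 5 = ln 5 * ln 7 / 30"
     "r2_term 7 = ln 7 * ln 3 / 56" "r2_term 9 = ln 3 * ln 11 / 90"
    by (simp_all add: r2_term_def m4 m9 p)
  have l2: "2/3 \<le> ln (2::real)" by (rule ln2_ge_two_thirds)
  have "ln (3::real) = ln (272/100) + ln (3 / (272/100))" by (rule ln_split) auto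
  moreover have "1 - 1/(3 / (272/100)) \<le> ln (3 / (272/100::real))" by (rule ln_lower) simp
  ultimately have l3: "1 + (1 - 272/300) \<le> ln (3::real)" using ln_272_gt_1 by simp
  have "ln (5::real) = 2 * ln 2 + ln (5/4)"
    using ln_div[of 5 4] ln_realpow[of 2 2] by simp
  moreover have "1 - 1/(5/4) \<le> ln (5/4::real)" by (rule ln_lower) simp
  ultimately have l5: "2 * (2/3) + 1/5 \<le> ln (5::real)" using l2 by simp
  have "ln (7::real) = ln 2 + ln 3 + ln (7/6)"
    using ln_div[of 7 6] ln_mult[of 2 3] by simp
  moreover have "1 - 1/(7/6) \<le> ln (7/6::real)" by (rule ln_lower) simp
  ultimately have l7: "2/3 + (1 + (1 - 272/300)) + 1/7 \<le> ln (7::real)" using l2 l3 by simp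
  have "ln (11::real) = 2 * ln 3 + ln (11/9)"
    using ln_div[of 11 9] ln_realpow[of 3 2] by simp
  moreover have "1 - 1/(11/9) \<le> ln (11/9::real)" by (rule ln_lower) simp
  ultimately have l11: "2 * (1 + (1 - 272/300)) + 2/11 \<le> ln (11::real)" using l3 by simp
  have a: "(2/3) * (2/3) \<le> ln 2 * (ln 2::real)" by (rule mult_mono[OF l2 l2]) auto
  have b: "(1 + (1 - 272/300)) * (2 * (2/3) + 1/5) \<le> ln 3 * (ln 5::real)" by (rule mult_mono[OF l3 l5]) auto
  have c: "(2 * (2/3) + 1/5) * (2/3 + (1 + (1 - 272/300)) + 1/7) \<le> ln 5 * (ln 7::real)" by (rule mult_mono[OF l5 l7]) auto
  have d: "(2/3 + (1 + (1 - 272/300)) + 1/7) * (1 + (1 - 272/300)) \<le> ln 7 * (ln 3::real)" by (rule mult_mono[OF l7 l3]) auto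
  have d': "ln 7 * ln 3 = ln 3 * (ln 7::real)" by simp
  have f: "(1 + (1 - 272/300)) * (2 * (1 + (1 - 272/300)) + 2/11) \<le> ln 3 * (ln 11::real)" by (rule mult_mono[OF l3 l11]) auto
  show ?thesis unfolding e using a b c d f by (simp add: d')
qed


lemma ln_le_4sqrt: "(z::real) \<ge> 1 \<Longrightarrow> ln z \<le> 4 * sqrt (sqrt z)"
proof -
  assume z: "z \<ge> 1"
  have "ln (sqrt (sqrt z)) \<le> sqrt (sqrt z) - 1" by (rule ln_le_minus_one) (use z in auto)
  moreover have "ln (sqrt (sqrt z)) = ln z / 4" using z by (simp add: ln_sqrt)
  ultimately show ?thesis by simp
qed

lemma F_le: "mangoldt m * mangoldt (m+2) \<le> (ln (real m + 2))^2"
proof -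
  have a: "mangoldt m \<le> ln (real m + 2)"
  proof (cases "m = 0")
    case False
    then have "mangoldt m \<le> ln (real m)" by (intro mangoldt_le) auto
    also have "\<dots> \<le> ln (real m + 2)" using False by simp
    finally show ?thesis .
  qed simp
  have b: "mangoldt (m+2) \<le> ln (real m + 2)" using mangoldt_le[of "m+2"] by (simp add: add.commute)
  show ?thesis unfolding power2_eq_square
    by (rule mult_mono[OF a b]) (auto intro: mangoldt_nonneg)
qed

lemma r2_term_nonneg: "0 \<le> r2_term m"
  unfolding r2_term_def by (intro divide_nonneg_nonneg mult_nonneg_nonneg mangoldt_nonneg) auto

lemma sqrt_tele: "(m::nat) \<ge> 1 \<Longrightarrow> sqrt m / (real m * (real m + 1)) \<le> 2 * (1 / sqrt m - 1 / sqrt (m + 1))"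
proof -
  assume m: "m \<ge> 1"
  define s where "s = sqrt m"
  define t where "t = sqrt (m+1)"
  have s2: "s^2 = m" unfolding s_def by simp
  have t2: "t^2 = m+1" unfolding t_def by simp
  have sp: "s > 0" using m unfolding s_def by simp
  have st: "s < t" unfolding s_def t_def by simp
  have "real m * (real m + 1) = s^2 * t^2" by (simp add: s2 t2)
  then have "sqrt m / (real m * (real m + 1)) = s / (s^2 * t^2)" by (simp add: s_def)
  also have "\<dots> = 1 / (s * t^2)" using sp by (simp add: power2_eq_square)
  finally have h1: "sqrt m / (real m * (real m + 1)) = 1 / (s * t^2)" .
  have "1 / sqrt m - 1 / sqrt (m + 1) = 1/s - 1/t" by (simp add: s_def t_def)
  also have "\<dots> = (t - s) / (s * t)" using sp st by (simp add: field_simps)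
  finally have h2: "1 / sqrt m - 1 / sqrt (m + 1) = (t - s) / (s * t)" .
  have h3: "1 / (s * t^2) \<le> 2 * ((t - s) / (s * t))"
  proof -
    have "1 \<le> 2 * t * (t - s)"
    proof -
      have "(t - s) * (t + s) = 1" using s2 t2 by (simp add: algebra_simps power2_eq_square)
      moreover have "t + s \<le> 2 * t" using st by simp
      ultimately have "1 \<le> (t-s) * (2*t)" using st by (metis mult_left_mono less_eq_real_def diff_gt_0_iff_gt)
      then show ?thesis by (simp add: algebra_simps)
    qed
    then show ?thesis using sp st by (simp add: field_simps power2_eq_square)
  qed
  show ?thesis using h1 h2 h3 by simp
qed

lemma r2_term_le: "(m::nat) \<ge> 1 \<Longrightarrow> r2_term m \<le> 64 * (1 / sqrt m - 1 / sqrt (m + 1))"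
proof -
  assume m: "m \<ge> 1"
  have "ln (real m + 2) \<le> 4 * sqrt (sqrt (real m + 2))" by (rule ln_le_4sqrt) auto
  then have "(ln (real m + 2))^2 \<le> (4 * sqrt (sqrt (real m + 2)))^2"
    by (rule power_mono) (use m in auto)
  also have "\<dots> = 16 * sqrt (real m + 2)" by (simp add: power_mult_distrib)
  also have "\<dots> \<le> 16 * sqrt (4 * real m)" using m by simp
  also have "\<dots> = 32 * sqrt m" by (simp add: real_sqrt_mult)
  finally have "mangoldt m * mangoldt (m+2) \<le> 32 * sqrt m" using F_le[of m] by linarith
  then have "r2_term m \<le> 32 * sqrt m / (real m * real (m+1))"
    unfolding r2_term_def by (intro divide_right_mono) auto
  also have "\<dots> = 32 * (sqrt m / (real m * (real m+1)))" by simp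
  also have "\<dots> \<le> 32 * (2 * (1 / sqrt m - 1 / sqrt (m + 1)))"
    using sqrt_tele[OF m] by linarith
  finally show ?thesis by simp
qed

definition g :: "nat \<Rightarrow> real" where "g n = 1 / sqrt (real (Suc n))"

lemma a_le: "r2_term (Suc n) \<le> 64 * (g n - g (Suc n))"
  using r2_term_le[of "Suc n"] unfolding g_def by (simp add: add.commute)

lemma g_lim: "g \<longlonglongrightarrow> 0"
proof -
  have "(\<lambda>n. 1 / sqrt (real n)) \<longlonglongrightarrow> 0"
    by (intro tendsto_divide_0[OF tendsto_const] filterlim_at_top_imp_at_infinity filterlim_compose[OF sqrt_at_top filterlim_real_sequentially])
  then show ?thesis unfolding g_def by (rule LIMSEQ_Suc)
qed

lemma tele_sums: "(\<lambda>n. 64 * (g (n + k) - g (Suc (n + k)))) sums (64 * g k)"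
proof -
  have "(\<lambda>n. g (n + k)) \<longlonglongrightarrow> 0" using g_lim by (rule LIMSEQ_ignore_initial_segment)
  from telescope_sums'[OF this] have "(\<lambda>n. g (n + k) - g (Suc n + k)) sums (g (0 + k) - 0)" .
  from sums_mult[OF this, of 64] show ?thesis by (simp add: algebra_simps)
qed

lemma r2_summable: "summable (\<lambda>n. r2_term (Suc n))"
proof (rule summable_comparison_test)
  show "\<exists>N. \<forall>n\<ge>N. norm (r2_term (Suc n)) \<le> 64 * (g n - g (Suc n))"
    using a_le r2_term_nonneg by auto
  show "summable (\<lambda>n. 64 * (g n - g (Suc n)))" using tele_sums[of 0] by (auto simp: sums_iff)
qed

lemma r2_tail: "0 \<le> r2 - (\<Sum>m=1..M. r2_term m) \<and> r2 - (\<Sum>m=1..M. r2_term m) \<le> 64 / sqrt (M + 1)"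
proof -
  have e: "(\<Sum>m=1..M. r2_term m) = (\<Sum>n<M. r2_term (Suc n))"
    using sum.atLeast1_atMost_eq[of r2_term M] by simp
  have "r2 = (\<Sum>n. r2_term (Suc (n + M))) + (\<Sum>n<M. r2_term (Suc n))"
    unfolding r2_def using suminf_split_initial_segment[OF r2_summable, of M] by simp
  then have d: "r2 - (\<Sum>m=1..M. r2_term m) = (\<Sum>n. r2_term (Suc (n + M)))" using e by simp
  have s: "summable (\<lambda>n. r2_term (Suc (n + M)))"
    using summable_ignore_initial_segment[OF r2_summable, of M] by simp
  have "(\<Sum>n. r2_term (Suc (n + M))) \<le> (\<Sum>n. 64 * (g (n + M) - g (Suc (n + M))))"
    by (rule suminf_le) (use a_le s tele_sums in \<open>auto simp: sums_iff\<close>)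
  also have "\<dots> = 64 * g M" using tele_sums[of M] by (simp add: sums_iff)
  finally have "(\<Sum>n. r2_term (Suc (n + M))) \<le> 64 / sqrt (M + 1)" by (simp add: g_def add.commute)
  moreover have "0 \<le> (\<Sum>n. r2_term (Suc (n + M)))" by (rule suminf_nonneg[OF s]) (rule r2_term_nonneg)
  ultimately show ?thesis using d by simp
qed


lemma floor_ge_iff:
  assumes "(x::real) \<ge> 0" "n \<ge> 1"
  shows "k \<le> nat \<lfloor>x / real n\<rfloor> \<longleftrightarrow> real k * real n \<le> x"
proof -
  have "k \<le> nat \<lfloor>x / real n\<rfloor> \<longleftrightarrow> int k \<le> \<lfloor>x / real n\<rfloor>"
    using assms by (intro le_nat_iff) auto
  also have "\<dots> \<longleftrightarrow> real k \<le> x / real n" by (metis floor_of_nat le_floor_iff of_int_of_nat_eq)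
  also have "\<dots> \<longleftrightarrow> real k * real n \<le> x" using assms by (simp add: pos_le_divide_eq)
  finally show ?thesis .
qed

lemma fiber:
  assumes x: "(x::real) \<ge> 1" and m: "m \<ge> 1"
  shows "{n \<in> {1..nat \<lfloor>x\<rfloor>}. nat \<lfloor>x / real n\<rfloor> = m} = {nat \<lfloor>x / real (Suc m)\<rfloor><..nat \<lfloor>x / real m\<rfloor>}"
proof (rule Set.set_eqI, rule iffI)
  fix n assume "n \<in> {n \<in> {1..nat \<lfloor>x\<rfloor>}. nat \<lfloor>x / real n\<rfloor> = m}"
  then have n: "n \<ge> 1" and e: "nat \<lfloor>x / real n\<rfloor> = m" by auto
  have "real m * real n \<le> x" using floor_ge_iff[of x n m] x n e by simp
  then have a: "n \<le> nat \<lfloor>x / real m\<rfloor>" using floor_ge_iff[of x m n] x m by (simp add: mult.commute)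
  have "\<not> real (Suc m) * real n \<le> x" using floor_ge_iff[of x n "Suc m"] x n e by simp
  then have b: "\<not> n \<le> nat \<lfloor>x / real (Suc m)\<rfloor>" using floor_ge_iff[of x "Suc m" n] x by (simp add: mult.commute)
  show "n \<in> {nat \<lfloor>x / real (Suc m)\<rfloor><..nat \<lfloor>x / real m\<rfloor>}" using a b by simp
next
  fix n assume "n \<in> {nat \<lfloor>x / real (Suc m)\<rfloor><..nat \<lfloor>x / real m\<rfloor>}"
  then have a: "n \<le> nat \<lfloor>x / real m\<rfloor>" and b: "\<not> n \<le> nat \<lfloor>x / real (Suc m)\<rfloor>" by auto
  have n: "n \<ge> 1" using b by linarith
  have "real n * real m \<le> x" using floor_ge_iff[of x m n] x m a by simp
  then have c: "m \<le> nat \<lfloor>x / real n\<rfloor>" using floor_ge_iff[of x n m] x n by (simp add: mult.commute)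
  have "\<not> real n * real (Suc m) \<le> x" using floor_ge_iff[of x "Suc m" n] x b by simp
  then have d: "\<not> Suc m \<le> nat \<lfloor>x / real n\<rfloor>" using floor_ge_iff[of x n "Suc m"] x n by (simp add: mult.commute)
  have "n \<le> nat \<lfloor>x\<rfloor>"
  proof -
    have "real n * 1 \<le> real n * real m" using m by (intro mult_left_mono) auto
    also have "\<dots> \<le> x" by fact
    finally show ?thesis using floor_ge_iff[of x 1 n] x by simp
  qed
  then show "n \<in> {n \<in> {1..nat \<lfloor>x\<rfloor>}. nat \<lfloor>x / real n\<rfloor> = m}" using n c d by simp
qed

lemma regroup:
  assumes x: "(x::real) \<ge> 1"
  shows "S2 x = (\<Sum>m=1..nat \<lfloor>x\<rfloor>. mangoldt m * mangoldt (m+2) *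
            (real (nat \<lfloor>x / real m\<rfloor>) - real (nat \<lfloor>x / real (Suc m)\<rfloor>)))"
proof -
  define N where "N = nat \<lfloor>x\<rfloor>"
  define h where "h = (\<lambda>n::nat. nat \<lfloor>x / real n\<rfloor>)"
  define F where "F = (\<lambda>m::nat. mangoldt m * mangoldt (m+2) :: real)"
  have img: "h ` {1..N} \<subseteq> {1..N}"
  proof
    fix y assume "y \<in> h ` {1..N}"
    then obtain n where n: "n \<in> {1..N}" and y: "y = h n" by auto
    have "real n \<le> x" using n x floor_ge_iff[of x 1 n] unfolding N_def by simp
    then have "1 \<le> h n" using floor_ge_iff[of x n 1] x n unfolding h_def by simp
    moreover have "h n \<le> N"
    proof -
      have "x / real n \<le> x" using n x by (simp add: divide_le_eq)
      then show ?thesis unfolding h_def N_def by (intro nat_mono floor_mono)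
    qed
    ultimately show "y \<in> {1..N}" using y by simp
  qed
  have "S2 x = (\<Sum>n\<in>{1..N}. F (h n))" unfolding S2_def N_def h_def F_def by simp
  also have "\<dots> = (\<Sum>m\<in>{1..N}. \<Sum>n\<in>{n \<in> {1..N}. h n = m}. F (h n))"
    by (rule sum.group[symmetric]) (use img in auto)
  also have "\<dots> = (\<Sum>m\<in>{1..N}. F m * real (card {n \<in> {1..N}. h n = m}))"
    by (intro sum.cong refl) simp
  also have "\<dots> = (\<Sum>m=1..N. F m * (real (nat \<lfloor>x / real m\<rfloor>) - real (nat \<lfloor>x / real (Suc m)\<rfloor>)))"
  proof (intro sum.cong refl)
    fix m assume m: "m \<in> {1..N}"
    have "nat \<lfloor>x / real (Suc m)\<rfloor> \<le> nat \<lfloor>x / real m\<rfloor>"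
      using m x by (intro nat_mono floor_mono divide_left_mono) auto
    then show "F m * real (card {n \<in> {1..N}. h n = m}) = F m * (real (nat \<lfloor>x / real m\<rfloor>) - real (nat \<lfloor>x / real (Suc m)\<rfloor>))"
      using fiber[OF x, of m] m unfolding h_def N_def by (simp add: of_nat_diff)
  qed
  finally show ?thesis unfolding F_def N_def .
qed


lemma main_est:
  assumes x3: "(x::real) \<ge> 3"
  shows "\<bar>S2 x - r2 * x\<bar> \<le> 72 * (x powr (2/3) * ln x ^ 2)"
proof -
  have x1: "x \<ge> 1" using x3 by simp
  define N where "N = nat \<lfloor>x\<rfloor>"
  define M where "M = nat \<lfloor>x powr (2/3)\<rfloor>"
  define F where "F = (\<lambda>m::nat. mangoldt m * mangoldt (m+2) :: real)"
  define q where "q = (\<lambda>m::nat. real (nat \<lfloor>x / real m\<rfloor>))"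
  define B where "B = 4 * ln x ^ 2"
  define P where "P = x powr (2/3)"
  have lnx: "1 \<le> ln x"
  proof -
    have "exp 1 \<le> x" using exp_le x3 by linarith
    then have "ln (exp 1) \<le> ln x" using x1 by (subst ln_le_cancel_iff) auto
    then show ?thesis by simp
  qed
  have P1: "1 \<le> P" unfolding P_def using x1 by (simp add: ge_one_powr_ge_zero)
  have Px: "P \<le> x" unfolding P_def using powr_mono[of "2/3" 1 x] x1 by simp
  have M1: "1 \<le> M" unfolding M_def using P1 P_def by (simp add: le_nat_iff le_floor_iff)
  have MN: "M \<le> N" unfolding M_def N_def using Px P_def by (intro nat_mono floor_mono) simp
  have Mle: "real M \<le> P" unfolding M_def P_def using P1 P_def by (simp add: of_nat_nat)
  have Mge: "P \<le> real M + 1" unfolding M_def P_def using P1 P_def by (simp add: of_nat_nat)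
  have Fnn: "\<And>m. 0 \<le> F m" unfolding F_def by (intro mult_nonneg_nonneg mangoldt_nonneg)
  have FB: "F m \<le> B" if "m \<le> N" for m
  proof -
    have mx: "real m \<le> x" using that x1 floor_ge_iff[of x 1 m] unfolding N_def by simp
    have "ln (real m + 2) \<le> ln (x^2)"
    proof -
      have "3 * x \<le> x * x" using x3 by (intro mult_right_mono) auto
      then have "real m + 2 \<le> x^2" using mx x3 unfolding power2_eq_square by linarith
      then show ?thesis by (subst ln_le_cancel_iff) auto
    qed
    also have "ln (x^2) = 2 * ln x" using x1 by (simp add: ln_realpow)
    finally have "ln (real m + 2) \<le> 2 * ln x" .
    then have "(ln (real m + 2))^2 \<le> (2 * ln x)^2" by (intro power_mono) auto
    then show ?thesis using F_le[of m] unfolding F_def B_def by (simp add: power_mult_distrib)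
  qed
  have qmono: "q (Suc m) \<le> q m" if "m \<ge> 1" for m
    unfolding q_def using that x1 by (simp add: nat_mono floor_mono divide_left_mono)
  have qfl: "q m = real_of_int \<lfloor>x / real m\<rfloor>" for m unfolding q_def using x1 by simp
  have S: "S2 x = (\<Sum>m=1..N. F m * (q m - q (Suc m)))"
    unfolding regroup[OF x1] F_def q_def N_def ..
  have split: "(\<Sum>m=1..N. F m * (q m - q (Suc m))) = (\<Sum>m=1..M. F m * (q m - q (Suc m))) + (\<Sum>m=Suc M..N. F m * (q m - q (Suc m)))"
    using sum.ub_add_nat[of 1 M "\<lambda>m. F m * (q m - q (Suc m))" "N - M"] MN by simp
  define P2 where "P2 = (\<Sum>m=Suc M..N. F m * (q m - q (Suc m)))"
  define P1s where "P1s = (\<Sum>m=1..M. F m * (q m - q (Suc m)))"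
  define R where "R = (\<Sum>m=1..M. r2_term m)"
  have P2nn: "0 \<le> P2" unfolding P2_def using Fnn qmono M1
    by (intro sum_nonneg mult_nonneg_nonneg) auto
  have "P2 \<le> (\<Sum>m=Suc M..N. B * (q m - q (Suc m)))" unfolding P2_def
    using FB qmono M1 by (intro sum_mono mult_right_mono) auto
  also have "\<dots> = B * (\<Sum>m=Suc M..N. (q m - q (Suc m)))" by (simp add: sum_distrib_left)
  also have "(\<Sum>m=Suc M..N. (q m - q (Suc m))) = - (\<Sum>m=Suc M..N. (q (Suc m) - q m))"
    by (simp add: sum_negf[symmetric])
  also have "(\<Sum>m=Suc M..N. (q (Suc m) - q m)) = q (Suc N) - q (Suc M)"
    using MN by (intro sum_Suc_diff) auto
  finally have P2a: "P2 \<le> B * (q (Suc M) - q (Suc N))" by simp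
  have qa: "q (Suc N) \<ge> 0" unfolding q_def by simp
  have qb: "q (Suc M) \<le> x / real (Suc M)" using qfl[of "Suc M"] of_int_floor_le[of "x / real (Suc M)"] by simp
  have "q (Suc M) - q (Suc N) \<le> x / (real M + 1)"
    using qa qb by (simp add: add.commute)
  also have "\<dots> \<le> x / P" using P1 Mge x1 by (intro divide_left_mono) auto
  also have "x / P = x powr (1/3)" unfolding P_def using x1 powr_diff[of x 1 "2/3"] by simp
  also have "\<dots> \<le> P" unfolding P_def using x1 by (intro powr_mono) auto
  finally have "q (Suc M) - q (Suc N) \<le> P" .
  then have P2b: "P2 \<le> B * P" using P2a
    by (smt (verit) B_def mult_left_mono zero_le_power2 mult_nonneg_nonneg)
  have each: "\<bar>F m * (q m - q (Suc m)) - x * r2_term m\<bar> \<le> F m" if "m \<ge> 1" for m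
  proof -
    have "x * r2_term m = F m * (x / real m - x / real (Suc m))"
      unfolding r2_term_def F_def using that by (simp add: field_simps)
    then have "F m * (q m - q (Suc m)) - x * r2_term m = F m * ((q m - q (Suc m)) - (x / real m - x / real (Suc m)))"
      by (simp add: algebra_simps)
    moreover have "\<bar>(q m - q (Suc m)) - (x / real m - x / real (Suc m))\<bar> \<le> 1"
      unfolding qfl using floor_le_iff[of "x / real m"] of_int_floor_le[of "x / real m"] of_int_floor_le[of "x / real (Suc m)"]
        real_of_int_floor_gt_diff_one[of "x / real m"] real_of_int_floor_gt_diff_one[of "x / real (Suc m)"] by linarith
    ultimately show ?thesis using Fnn[of m] by (simp add: abs_mult mult_left_le)
  qed
  have "\<bar>P1s - x * R\<bar> = \<bar>\<Sum>m=1..M. F m * (q m - q (Suc m)) - x * r2_term m\<bar>"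
    unfolding P1s_def R_def by (simp add: sum_subtractf sum_distrib_left)
  also have "\<dots> \<le> (\<Sum>m=1..M. \<bar>F m * (q m - q (Suc m)) - x * r2_term m\<bar>)" by (rule sum_abs)
  also have "\<dots> \<le> (\<Sum>m=1..M. B)" proof (rule sum_mono)
    fix m assume "m \<in> {1..M}"
    then have "1 \<le> m" "m \<le> N" using MN by auto
    then show "\<bar>F m * (q m - q (Suc m)) - x * r2_term m\<bar> \<le> B" using each[of m] FB[of m] by linarith
  qed
  also have "\<dots> = real M * B" by simp
  also have "\<dots> \<le> P * B" using Mle by (intro mult_right_mono) (auto simp: B_def)
  finally have P1b: "\<bar>P1s - x * R\<bar> \<le> B * P" by (simp add: mult.commute)
  have T: "0 \<le> r2 - R" "r2 - R \<le> 64 / sqrt (real M + 1)" using r2_tail[of M] unfolding R_def by (auto simp: add.commute)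
  have "x powr (1/3) \<le> sqrt (real M + 1)"
  proof -
    have "x powr (1/3) = sqrt P" unfolding P_def using powr_half_sqrt_powr[of x "2/3"] x1 by simp
    then show ?thesis using Mge by simp
  qed
  then have "64 / sqrt (real M + 1) \<le> 64 / x powr (1/3)" using x1
    by (intro divide_left_mono) auto
  then have "x * (r2 - R) \<le> x * (64 / x powr (1/3))" using T x1
    by (intro mult_left_mono) auto
  also have "x * (64 / x powr (1/3)) = 64 * P" unfolding P_def using x1 powr_diff[of x 1 "1/3"] by simp
  finally have Tb: "x * (r2 - R) \<le> 64 * P" .
  have Tnn: "0 \<le> x * (r2 - R)" using T x1 by simp
  have "S2 x - r2 * x = (P1s - x * R) + P2 - x * (r2 - R)"
    unfolding S split P1s_def[symmetric] P2_def[symmetric] by (simp add: algebra_simps)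
  then have "\<bar>S2 x - r2 * x\<bar> \<le> B * P + B * P + 64 * P" using P1b P2b P2nn Tb Tnn by linarith
  also have "\<dots> = (8 * ln x ^ 2 + 64) * P" unfolding B_def by (simp add: algebra_simps)
  also have "\<dots> \<le> (72 * ln x ^ 2) * P"
  proof -
    have "1 \<le> ln x ^ 2" using lnx by (simp add: one_le_power)
    then show ?thesis using P1 by (intro mult_right_mono) auto
  qed
  finally show ?thesis unfolding P_def by (simp add: mult_ac)
qed

theorem theorem10p2:
  fixes \<epsilon> :: real
  assumes "\<epsilon> > 0"
  shows "summable (\<lambda>n. r2_term (Suc n)) \<and> r2 \<ge> 0.368142813 \<and>
         (\<lambda>x. S2 x - r2 * x) \<in> O[at_top](\<lambda>x. x powr ((2 + \<epsilon>) / 3) * (ln x) ^ 2)"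
proof (intro conjI)
  show "summable (\<lambda>n. r2_term (Suc n))" by (rule r2_summable)
  have "(\<Sum>n\<in>{1,2,4,6,8}. r2_term (Suc n)) \<le> (\<Sum>n. r2_term (Suc n))"
    by (rule sum_le_suminf[OF r2_summable]) (auto intro: r2_term_nonneg)
  moreover have "(\<Sum>n\<in>{1,2,4,6,8}. r2_term (Suc n)) = r2_term 2 + r2_term 3 + r2_term 5 + r2_term 7 + r2_term 9"
    by (simp add: eval_nat_numeral)
  ultimately show "r2 \<ge> 0.368142813" using r2_lower unfolding r2_def by linarith
  show "(\<lambda>x. S2 x - r2 * x) \<in> O[at_top](\<lambda>x. x powr ((2 + \<epsilon>) / 3) * (ln x) ^ 2)"
  proof (rule bigoI)
    show "\<forall>\<^sub>F x in at_top. norm (S2 x - r2 * x) \<le> 72 * norm (x powr ((2 + \<epsilon>) / 3) * (ln x) ^ 2)"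
      using eventually_ge_at_top[of "3::real"]
    proof eventually_elim
      case (elim x)
      have "x powr (2/3) \<le> x powr ((2 + \<epsilon>) / 3)" using elim assms by (intro powr_mono) auto
      then have "x powr (2/3) * ln x ^ 2 \<le> x powr ((2 + \<epsilon>) / 3) * ln x ^ 2"
        by (intro mult_right_mono) auto
      then show ?case using main_est[OF elim] by simp
    qed
  qed
qed

end
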